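(* Let $X=(X_1,\dots,X_n)\sim\mathcal{D}$ be an arbitrary time-dependent Markov chain over $\Omega=\Omega_1\times\dots\times\Omega_n$ with each $\Omega_i$ finite. Then for any $\epsilon>0$ there is a $\Delta$-MRF distribution $\mathcal{D}_\mathcal{M}$ on $\Omega$ such that for every $\omega\in\Omega$, $$\Pr_{Y\sim\mathcal{D}_\mathcal{M}}[Y=\omega]\ge(1-\epsilon)\Pr_{X\sim\mathcal{D}}[X=\omega],$$ where $\Delta=O\big(\log\frac{n\cdot\max_i|\Omega_i|}{\epsilon}\big)$.
   Context: Time-dependent Markov chain: a random variable $X=(X_1,\dots,X_n)\in\Omega$ such that for every $\omega\in\Omega$ and every $i\ge2$, $\Pr[X_i=\omega_i\mid X_j=\omega_j\ \forall j<i]=\Pr[X_i=\omega_i\mid X_{i-1}=\omega_{i-1}]$. MRF: an MRF on $\Omega$ consists of a hypergraph edge set $E'\subseteq2^{[n]}$ and potentials $\psi_i:\Omega_i\to\mathbb{R}$, $\psi_e:\prod_{i\in e}\Omega_i\to\mathbb{R}$, defining $\Pr[Y=u]\propto\exp(\sum_i\psi_i(u_i)+\sum_{e}\psi_e((u_j)_{j\in e}))$; its weighted maximum degree is $\max_i\max_{u\in\Omega}|\sum_{e\ni i}\psi_e((u_j)_{j\in e})|$; a $\Delta$-MRF distribution is one arising from an MRF whose weighted maximum degree is $\Delta$. *)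

theory Defs
  imports Complex_Main "HOL-Library.FuncSet"
begin

text \<open>Coordinates are indexed by 0..n-1. The state space is
  Omega = PiE {..<n} Om. A distribution on it is a probability mass function
  p on PiE {..<n} Om.\<close>

definition is_distribution :: "nat \<Rightarrow> (nat \<Rightarrow> 'a set) \<Rightarrow> ((nat \<Rightarrow> 'a) \<Rightarrow> real) \<Rightarrow> bool" where
  "is_distribution n Om p \<longleftrightarrow>
     (\<forall>u\<in>PiE {..<n} Om. 0 \<le> p u) \<and> (\<Sum>u\<in>PiE {..<n} Om. p u) = 1"

definition prob_ev :: "nat \<Rightarrow> (nat \<Rightarrow> 'a set) \<Rightarrow> ((nat \<Rightarrow> 'a) \<Rightarrow> real) \<Rightarrow> ((nat \<Rightarrow> 'a) \<Rightarrow> bool) \<Rightarrow> real" where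
  "prob_ev n Om p P = (\<Sum>u\<in>{u\<in>PiE {..<n} Om. P u}. p u)"

text \<open>Time-dependent Markov chain: for every w in Omega and every 1 \<le> i < n,
  Pr[X_i = w_i | X_j = w_j for all j<i] = Pr[X_i = w_i | X_(i-1) = w_(i-1)],
  written in multiplied-out form (so that zero-probability conditioning events
  impose no constraint).\<close>
definition time_dep_markov_chain :: "nat \<Rightarrow> (nat \<Rightarrow> 'a set) \<Rightarrow> ((nat \<Rightarrow> 'a) \<Rightarrow> real) \<Rightarrow> bool" where
  "time_dep_markov_chain n Om p \<longleftrightarrow> is_distribution n Om p \<and>
     (\<forall>w\<in>PiE {..<n} Om. \<forall>i. 1 \<le> i \<and> i < n \<longrightarrow>
        prob_ev n Om p (\<lambda>u. \<forall>j\<le>i. u j = w j) * prob_ev n Om p (\<lambda>u. u (i - 1) = w (i - 1))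
        = prob_ev n Om p (\<lambda>u. \<forall>j<i. u j = w j) *
          prob_ev n Om p (\<lambda>u. u (i - 1) = w (i - 1) \<and> u i = w i))"

definition mrf_score :: "nat \<Rightarrow> nat set set \<Rightarrow> (nat \<Rightarrow> 'a \<Rightarrow> real) \<Rightarrow> (nat set \<Rightarrow> (nat \<Rightarrow> 'a) \<Rightarrow> real) \<Rightarrow> (nat \<Rightarrow> 'a) \<Rightarrow> real" where
  "mrf_score n E psiV psiE u = (\<Sum>i<n. psiV i (u i)) + (\<Sum>e\<in>E. psiE e (restrict u e))"

definition mrf_dist :: "nat \<Rightarrow> (nat \<Rightarrow> 'a set) \<Rightarrow> nat set set \<Rightarrow> (nat \<Rightarrow> 'a \<Rightarrow> real) \<Rightarrow> (nat set \<Rightarrow> (nat \<Rightarrow> 'a) \<Rightarrow> real) \<Rightarrow> (nat \<Rightarrow> 'a) \<Rightarrow> real" where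
  "mrf_dist n Om E psiV psiE u =
     exp (mrf_score n E psiV psiE u) / (\<Sum>v\<in>PiE {..<n} Om. exp (mrf_score n E psiV psiE v))"

definition weighted_max_degree :: "nat \<Rightarrow> (nat \<Rightarrow> 'a set) \<Rightarrow> nat set set \<Rightarrow> (nat set \<Rightarrow> (nat \<Rightarrow> 'a) \<Rightarrow> real) \<Rightarrow> real" where
  "weighted_max_degree n Om E psiE =
     Max {\<bar>\<Sum>e\<in>{e\<in>E. i \<in> e}. psiE e (restrict u e)\<bar> | i u. i < n \<and> u \<in> PiE {..<n} Om}"

definition is_Delta_MRF_dist :: "nat \<Rightarrow> (nat \<Rightarrow> 'a set) \<Rightarrow> real \<Rightarrow> ((nat \<Rightarrow> 'a) \<Rightarrow> real) \<Rightarrow> bool" where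
  "is_Delta_MRF_dist n Om \<Delta> q \<longleftrightarrow>
     (\<exists>E psiV psiE. E \<subseteq> Pow {..<n} \<and>
        weighted_max_degree n Om E psiE = \<Delta> \<and>
        (\<forall>u\<in>PiE {..<n} Om. q u = mrf_dist n Om E psiV psiE u))"

end

theory Submission
  imports Defs
begin

lemma chain_sum:
  fixes h :: "nat \<Rightarrow> 'a \<Rightarrow> 'a \<Rightarrow> real"
  shows "(\<forall>i<n. finite (Om i)) \<Longrightarrow> (\<forall>i<n. \<forall>a b. 0 \<le> h i a b) \<Longrightarrow>
    (\<forall>i<n. \<forall>a. (\<Sum>b\<in>Om i. h i a b) \<le> B) \<Longrightarrow> (\<forall>a a' b. h 0 a b = h 0 a' b) \<Longrightarrow> 0 \<le> B \<Longrightarrow>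
    (\<Sum>u\<in>PiE {..<n} Om. \<Prod>i<n. h i (u (i-1)) (u i)) \<le> B ^ n"
proof (induction n)
  case 0
  then show ?case by simp
next
  case (Suc n)
  let ?F = "\<lambda>u. \<Prod>i<Suc n. h i (u (i-1)) (u i)"
  let ?G = "\<lambda>u. \<Prod>i<n. h i (u (i-1)) (u i)"
  have IH: "(\<Sum>u\<in>PiE {..<n} Om. ?G u) \<le> B^n" using Suc by auto
  have fin: "finite (PiE {..<n} Om)" using Suc.prems(1) by (intro finite_PiE) auto
  have finn: "finite (Om n)" using Suc.prems(1) by auto
  have "(\<Sum>u\<in>PiE {..<Suc n} Om. ?F u) = (\<Sum>u\<in>(\<lambda>(y, g). g(n := y)) ` (Om n \<times> PiE {..<n} Om). ?F u)"
    by (simp add: lessThan_Suc PiE_insert_eq)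
  also have "\<dots> = (\<Sum>(b,g)\<in>Om n \<times> PiE {..<n} Om. ?F (g(n:=b)))"
    by (subst sum.reindex) (auto simp: inj_combinator case_prod_beta)
  also have "\<dots> = (\<Sum>b\<in>Om n. \<Sum>g\<in>PiE {..<n} Om. ?F (g(n:=b)))"
    by (simp add: sum.cartesian_product)
  also have "\<dots> = (\<Sum>b\<in>Om n. \<Sum>g\<in>PiE {..<n} Om. ?G g * h n ((g(n:=b)) (n-1)) b)"
  proof (intro sum.cong refl)
    fix b g
    have "(\<Prod>i<n. h i ((g(n:=b)) (i-1)) ((g(n:=b)) i)) = ?G g"
      by (intro prod.cong refl) auto
    then show "?F (g(n:=b)) = ?G g * h n ((g(n:=b)) (n-1)) b"
      by (simp add: prod.lessThan_Suc)
  qed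
  also have "\<dots> = (\<Sum>g\<in>PiE {..<n} Om. ?G g * (\<Sum>b\<in>Om n. h n ((g(n:=b)) (n-1)) b))"
    by (simp add: sum.swap[of _ "Om n"] sum_distrib_left)
  also have "\<dots> \<le> (\<Sum>g\<in>PiE {..<n} Om. ?G g * B)"
  proof (intro sum_mono mult_left_mono)
    fix g
    show "0 \<le> ?G g" using Suc.prems(2) by (intro prod_nonneg) auto
    show "(\<Sum>b\<in>Om n. h n ((g(n:=b)) (n-1)) b) \<le> B"
    proof (cases "n = 0")
      case True
      have "(\<Sum>b\<in>Om n. h n ((g(n:=b)) (n-1)) b) = (\<Sum>b\<in>Om 0. h 0 undefined b)"
        using True Suc.prems(4) by (intro sum.cong) auto
      also have "\<dots> \<le> B" using Suc.prems(3) True by auto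
      finally show ?thesis .
    next
      case False
      have "(\<Sum>b\<in>Om n. h n ((g(n:=b)) (n-1)) b) = (\<Sum>b\<in>Om n. h n (g (n-1)) b)"
        using False by (intro sum.cong) auto
      also have "\<dots> \<le> B" using Suc.prems(3) by auto
      finally show ?thesis .
    qed
  qed
  also have "\<dots> = (\<Sum>g\<in>PiE {..<n} Om. ?G g) * B" by (simp add: sum_distrib_right)
  also have "\<dots> \<le> B^n * B" using IH Suc.prems(5) by (rule mult_right_mono)
  finally show ?case by (simp add: mult.commute)
qed

definition Tr :: "nat \<Rightarrow> (nat \<Rightarrow> 'a set) \<Rightarrow> ((nat \<Rightarrow> 'a) \<Rightarrow> real) \<Rightarrow> nat \<Rightarrow> 'a \<Rightarrow> 'a \<Rightarrow> real" where
  "Tr n Om p i a b = (if i = 0 then prob_ev n Om p (\<lambda>u. u 0 = b)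
     else prob_ev n Om p (\<lambda>u. u (i-1) = a \<and> u i = b) / prob_ev n Om p (\<lambda>u. u (i-1) = a))"

lemma pe_nonneg: "is_distribution n Om p \<Longrightarrow> 0 \<le> prob_ev n Om p P"
  unfolding prob_ev_def is_distribution_def by (intro sum_nonneg) auto

lemma pe_mono:
  assumes "is_distribution n Om p" "\<forall>i<n. finite (Om i)"
    "\<And>u. u \<in> PiE {..<n} Om \<Longrightarrow> P u \<Longrightarrow> Q u"
  shows "prob_ev n Om p P \<le> prob_ev n Om p Q"
proof -
  have fin: "finite (PiE {..<n} Om)" using assms(2) by (intro finite_PiE) auto
  show ?thesis unfolding prob_ev_def
    using assms fin by (intro sum_mono2) (auto simp: is_distribution_def)
qed

lemma pe_le1:
  assumes "is_distribution n Om p" "\<forall>i<n. finite (Om i)"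
  shows "prob_ev n Om p P \<le> 1"
proof -
  have "prob_ev n Om p P \<le> prob_ev n Om p (\<lambda>_. True)" using assms by (intro pe_mono) auto
  also have "\<dots> = 1" using assms(1) by (simp add: prob_ev_def is_distribution_def)
  finally show ?thesis .
qed

lemma pe_sum:
  assumes "\<forall>i<n. finite (Om i)" "i < n"
  shows "(\<Sum>b\<in>Om i. prob_ev n Om p (\<lambda>u. P u \<and> u i = b)) = prob_ev n Om p P"
proof -
  have fin: "finite (PiE {..<n} Om)" using assms(1) by (intro finite_PiE) auto
  let ?S = "{u\<in>PiE {..<n} Om. P u}"
  have finS: "finite ?S" using fin by auto
  have "(\<Sum>b\<in>Om i. prob_ev n Om p (\<lambda>u. P u \<and> u i = b))
      = (\<Sum>b\<in>Om i. \<Sum>u\<in>?S. if u i = b then p u else 0)"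
  proof (intro sum.cong refl)
    fix b
    have "{u\<in>PiE {..<n} Om. P u \<and> u i = b} = {u\<in>?S. u i = b}" by auto
    then have "prob_ev n Om p (\<lambda>u. P u \<and> u i = b) = sum p {u\<in>?S. u i = b}"
      unfolding prob_ev_def by simp
    also have "\<dots> = (\<Sum>u\<in>?S. if u i = b then p u else 0)" by (rule sum.inter_filter[OF finS])
    finally show "prob_ev n Om p (\<lambda>u. P u \<and> u i = b) = (\<Sum>u\<in>?S. if u i = b then p u else 0)" .
  qed
  also have "\<dots> = (\<Sum>u\<in>?S. \<Sum>b\<in>Om i. if u i = b then p u else 0)" by (rule sum.swap)
  also have "\<dots> = (\<Sum>u\<in>?S. p u)"
    using assms(1,2) by (intro sum.cong refl) (auto simp: PiE_mem)
  finally show ?thesis by (simp add: prob_ev_def)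
qed

lemma Tr_nonneg: "is_distribution n Om p \<Longrightarrow> 0 \<le> Tr n Om p i a b"
  unfolding Tr_def by (auto intro!: divide_nonneg_nonneg pe_nonneg)

lemma Tr_le1:
  assumes "is_distribution n Om p" "\<forall>i<n. finite (Om i)"
  shows "Tr n Om p i a b \<le> 1"
proof (cases "i = 0")
  case True then show ?thesis using pe_le1[OF assms] by (simp add: Tr_def)
next
  case False
  have "prob_ev n Om p (\<lambda>u. u (i-1) = a \<and> u i = b) \<le> prob_ev n Om p (\<lambda>u. u (i-1) = a)"
    using assms by (intro pe_mono) auto
  moreover have "0 \<le> prob_ev n Om p (\<lambda>u. u (i-1) = a)" using pe_nonneg[OF assms(1)] .
  ultimately show ?thesis using False
    by (cases "prob_ev n Om p (\<lambda>u. u (i-1) = a) = 0") (auto simp: Tr_def divide_le_eq_1)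
qed

lemma Tr_sum:
  assumes "is_distribution n Om p" "\<forall>i<n. finite (Om i)" "i < n"
  shows "(\<Sum>b\<in>Om i. Tr n Om p i a b) \<le> 1"
proof (cases "i = 0")
  case True
  have "(\<Sum>b\<in>Om i. Tr n Om p i a b) = (\<Sum>b\<in>Om i. prob_ev n Om p (\<lambda>u. True \<and> u i = b))"
    using True by (simp add: Tr_def)
  also have "\<dots> = prob_ev n Om p (\<lambda>u. True)" using assms(2,3) by (rule pe_sum)
  also have "\<dots> \<le> 1" using pe_le1[OF assms(1,2)] .
  finally show ?thesis .
next
  case False
  let ?D = "prob_ev n Om p (\<lambda>u. u (i-1) = a)"
  have "(\<Sum>b\<in>Om i. Tr n Om p i a b) = (\<Sum>b\<in>Om i. prob_ev n Om p (\<lambda>u. u (i-1) = a \<and> u i = b)) / ?D"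
    using False by (simp add: Tr_def sum_divide_distrib)
  also have "\<dots> = ?D / ?D" using pe_sum[OF assms(2,3), of p "\<lambda>u. u (i-1) = a"] by simp
  also have "\<dots> \<le> 1" by (cases "?D = 0") auto
  finally show ?thesis .
qed

lemma prefix_bound:
  assumes mc: "time_dep_markov_chain n Om p" and fin: "\<forall>i<n. finite (Om i)"
    and w: "w \<in> PiE {..<n} Om" and d: "0 < d"
  shows "i < n \<Longrightarrow> prob_ev n Om p (\<lambda>u. \<forall>j\<le>i. u j = w j)
     \<le> (\<Prod>j\<le>i. max (Tr n Om p j (w (j-1)) (w j)) d)"
proof (induction i)
  case 0
  have "prob_ev n Om p (\<lambda>u. \<forall>j\<le>0. u j = w j) = Tr n Om p 0 (w (0-1)) (w 0)"
    by (simp add: Tr_def)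
  then show ?case by simp
next
  case (Suc i)
  have dist: "is_distribution n Om p" using mc by (simp add: time_dep_markov_chain_def)
  let ?A = "prob_ev n Om p (\<lambda>u. \<forall>j\<le>i. u j = w j)"
  let ?D = "prob_ev n Om p (\<lambda>u. u i = w i)"
  let ?N = "prob_ev n Om p (\<lambda>u. u i = w i \<and> u (Suc i) = w (Suc i))"
  let ?P = "prob_ev n Om p (\<lambda>u. \<forall>j\<le>Suc i. u j = w j)"
  let ?R = "\<Prod>j\<le>i. max (Tr n Om p j (w (j-1)) (w j)) d"
  have IH: "?A \<le> ?R" using Suc.IH Suc.prems by simp
  have Rnn: "0 \<le> ?R" using d by (intro prod_nonneg) auto
  have eq1: "(\<lambda>u. \<forall>j<Suc i. u j = w j) = (\<lambda>u. \<forall>j\<le>i. u j = w j)"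
    by (simp add: less_Suc_eq_le)
  have mc1: "\<forall>w\<in>PiE {..<n} Om. \<forall>i. 1 \<le> i \<and> i < n \<longrightarrow>
        prob_ev n Om p (\<lambda>u. \<forall>j\<le>i. u j = w j) * prob_ev n Om p (\<lambda>u. u (i - 1) = w (i - 1))
        = prob_ev n Om p (\<lambda>u. \<forall>j<i. u j = w j) *
          prob_ev n Om p (\<lambda>u. u (i - 1) = w (i - 1) \<and> u i = w i)"
    using mc unfolding time_dep_markov_chain_def by blast
  have "prob_ev n Om p (\<lambda>u. \<forall>j\<le>Suc i. u j = w j) * prob_ev n Om p (\<lambda>u. u (Suc i - 1) = w (Suc i - 1))
        = prob_ev n Om p (\<lambda>u. \<forall>j<Suc i. u j = w j) *
          prob_ev n Om p (\<lambda>u. u (Suc i - 1) = w (Suc i - 1) \<and> u (Suc i) = w (Suc i))"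
    using mc1[rule_format, OF w, of "Suc i"] Suc.prems by simp
  then have mce: "?P * ?D = ?A * ?N" by (simp only: eq1 diff_Suc_1)
  have Mnn: "0 \<le> max (Tr n Om p (Suc i) (w i) (w (Suc i))) d" using d by simp
  show ?case
  proof (cases "?D = 0")
    case True
    have "?P \<le> ?D" using dist fin by (intro pe_mono) auto
    then have "?P \<le> 0" using True by simp
    also have "0 \<le> ?R * max (Tr n Om p (Suc i) (w i) (w (Suc i))) d" using Rnn Mnn by simp
    finally show ?thesis by (simp add: prod.atMost_Suc)
  next
    case False
    then have "?P = ?A * (?N / ?D)" using mce by (simp add: field_simps)
    also have "\<dots> = ?A * Tr n Om p (Suc i) (w i) (w (Suc i))" by (simp add: Tr_def)
    also have "\<dots> \<le> ?R * max (Tr n Om p (Suc i) (w i) (w (Suc i))) d"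
      using IH Rnn pe_nonneg[OF dist] Tr_nonneg[OF dist] by (intro mult_mono) auto
    finally show ?thesis by (simp add: prod.atMost_Suc)
  qed
qed

lemma Max_two: "1 \<le> (i::nat) \<Longrightarrow> Max {i - 1, i} = i"
  by simp

theorem lemma5p2:
  "\<exists>C::real. C > 0 \<and>
     (\<forall>(n::nat) (Om::nat \<Rightarrow> 'a set) (p::(nat \<Rightarrow> 'a) \<Rightarrow> real) (\<epsilon>::real).
        n \<ge> 1 \<longrightarrow> (\<forall>i<n. finite (Om i) \<and> Om i \<noteq> {}) \<longrightarrow>
        time_dep_markov_chain n Om p \<longrightarrow> 0 < \<epsilon> \<longrightarrow> \<epsilon> < 1 \<longrightarrow>
        (\<exists>\<Delta> q. is_Delta_MRF_dist n Om \<Delta> q \<and>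
           \<Delta> \<le> C * ln (real n * real (Max ((\<lambda>i. card (Om i)) ` {..<n})) / \<epsilon>) \<and>
           (\<forall>w\<in>PiE {..<n} Om. q w \<ge> (1 - \<epsilon>) * p w)))"
proof (rule exI[of _ 2], intro conjI allI impI)
  fix n :: nat and Om :: "nat \<Rightarrow> 'a set" and p :: "(nat \<Rightarrow> 'a) \<Rightarrow> real" and \<epsilon> :: real
  assume n1: "n \<ge> 1" and Omf: "\<forall>i<n. finite (Om i) \<and> Om i \<noteq> {}"
    and mc: "time_dep_markov_chain n Om p" and e0: "0 < \<epsilon>" and e1: "\<epsilon> < 1"
  have fin: "\<forall>i<n. finite (Om i)" using Omf by auto
  have dist: "is_distribution n Om p" using mc by (simp add: time_dep_markov_chain_def)
  have finP: "finite (PiE {..<n} Om)" using fin by (intro finite_PiE) auto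
  have neP: "PiE {..<n} Om \<noteq> {}" using Omf by (simp add: PiE_eq_empty_iff)
  define k where "k = Max ((\<lambda>i. card (Om i)) ` {..<n})"
  have kge: "card (Om i) \<le> k" if "i < n" for i
    unfolding k_def using that by (intro Max_ge) auto
  have k1: "1 \<le> k"
  proof -
    have "0 < card (Om 0)" using Omf n1 by (simp add: card_gt_0_iff)
    then show ?thesis using kge[of 0] n1 by simp
  qed
  define d where "d = \<epsilon> / (real n * real k)"
  have nk: "1 \<le> real n * real k"
  proof -
    have a: "(1::real) \<le> real n" using n1 by simp
    have b: "(1::real) \<le> real k" using k1 by simp
    have "(1::real) * 1 \<le> real n * real k" using a b by (intro mult_mono) auto
    then show ?thesis by simp
  qed
  have d0: "0 < d" unfolding d_def using e0 nk by simp
  have d1: "d \<le> 1" unfolding d_def using e0 e1 nk by (simp add: divide_le_eq)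
  have nkd: "real n * real k * d = \<epsilon>"
  proof -
    have "real n * real k \<noteq> 0" using nk by linarith
    then show ?thesis unfolding d_def by simp
  qed
  define h where "h i a b = max (Tr n Om p i a b) d" for i a b
  have h_pos: "d \<le> h i a b" for i a b by (simp add: h_def)
  have h_le1: "h i a b \<le> 1" for i a b using Tr_le1[OF dist fin] d1 by (simp add: h_def)
  define E where "E = (\<lambda>i. {i - 1, i}) ` {1..<n}"
  define psiV where "psiV i x = (if i = 0 then ln (h 0 x x) else 0)" for i :: nat and x :: 'a
  define psiE where "psiE e v = ln (h (Max e) (v (Max e - 1)) (v (Max e)))" for e :: "nat set" and v :: "nat \<Rightarrow> 'a"
  define \<Phi> where "\<Phi> u = (\<Prod>i<n. h i (u (i-1)) (u i))" for u :: "nat \<Rightarrow> 'a"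
  have inj: "inj_on (\<lambda>i. {i - 1, i}) {1..<n}"
  proof (rule inj_onI)
    fix x y assume xy: "x \<in> {1..<n}" "y \<in> {1..<n}" "{x - 1, x} = {y - 1, y}"
    have "Max {x - 1, x} = Max {y - 1, y}" using xy(3) by (rule arg_cong)
    moreover have "Max {x - 1, x} = x" using xy(1) by (intro Max_two) simp
    moreover have "Max {y - 1, y} = y" using xy(2) by (intro Max_two) simp
    ultimately show "x = y" by simp
  qed
  have score: "exp (mrf_score n E psiV psiE u) = \<Phi> u" for u
  proof -
    have s1: "(\<Sum>i<n. psiV i (u i)) = ln (h 0 (u 0) (u 0))"
      using n1 by (simp add: psiV_def)
    have s2: "(\<Sum>e\<in>E. psiE e (restrict u e)) = (\<Sum>i\<in>{1..<n}. ln (h i (u (i-1)) (u i)))"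
      unfolding E_def
      by (subst sum.reindex[OF inj]) (auto intro!: sum.cong simp: psiE_def Max_two)
    have sp: "{..<n} = insert 0 {1..<n}" using n1 by auto
    have "mrf_score n E psiV psiE u = (\<Sum>i<n. ln (h i (u (i-1)) (u i)))"
      unfolding mrf_score_def s1 s2 by (subst sp, subst sum.insert) auto
    then have "exp (mrf_score n E psiV psiE u) = (\<Prod>i<n. exp (ln (h i (u (i-1)) (u i))))"
      by (simp add: exp_sum)
    also have "\<dots> = \<Phi> u" unfolding \<Phi>_def
      using h_pos d0 by (intro prod.cong refl exp_ln) (meson less_le_trans)
    finally show ?thesis .
  qed
  define Z where "Z = (\<Sum>v\<in>PiE {..<n} Om. \<Phi> v)"
  have Zle: "Z \<le> (1 + real k * d) ^ n"
    unfolding Z_def \<Phi>_def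
  proof (rule chain_sum)
    show "\<forall>i<n. finite (Om i)" by fact
    show "\<forall>i<n. \<forall>a b. 0 \<le> h i a b" using h_pos d0 by (meson less_le_trans less_imp_le)
    show "\<forall>a a' b. h 0 a b = h 0 a' b" by (simp add: h_def Tr_def)
    show "0 \<le> 1 + real k * d" using d0 by simp
    show "\<forall>i<n. \<forall>a. (\<Sum>b\<in>Om i. h i a b) \<le> 1 + real k * d"
    proof (intro allI impI)
      fix i a assume i: "i < n"
      have "(\<Sum>b\<in>Om i. h i a b) \<le> (\<Sum>b\<in>Om i. Tr n Om p i a b + d)"
        using Tr_nonneg[OF dist] d0 by (intro sum_mono) (simp add: h_def)
      also have "\<dots> = (\<Sum>b\<in>Om i. Tr n Om p i a b) + real (card (Om i)) * d"
        by (simp add: sum.distrib)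
      also have "\<dots> \<le> 1 + real k * d"
        using Tr_sum[OF dist fin i, of a] kge[OF i] d0
        by (intro add_mono mult_right_mono) auto
      finally show "(\<Sum>b\<in>Om i. h i a b) \<le> 1 + real k * d" .
    qed
  qed
  have "(1 + real k * d) ^ n \<le> exp (real k * d) ^ n"
    using d0 by (intro power_mono) auto
  also have "\<dots> = exp \<epsilon>" using nkd by (simp add: exp_of_nat_mult[symmetric] mult.assoc)
  finally have Zle2: "Z \<le> exp \<epsilon>" using Zle by simp
  have ee: "(1 - \<epsilon>) * exp \<epsilon> \<le> 1"
  proof -
    have "1 - \<epsilon> \<le> exp (- \<epsilon>)" using exp_ge_add_one_self[of "-\<epsilon>"] by simp
    then have "(1 - \<epsilon>) * exp \<epsilon> \<le> exp (-\<epsilon>) * exp \<epsilon>" by (intro mult_right_mono) auto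
    then show ?thesis by (simp add: exp_minus)
  qed
  have Phi_pos: "0 < \<Phi> u" for u unfolding \<Phi>_def
    using h_pos d0 by (intro prod_pos) (meson less_le_trans)
  have Zpos: "0 < Z" unfolding Z_def using neP finP Phi_pos
    by (intro sum_pos) auto
  have Z1: "(1 - \<epsilon>) * Z \<le> 1"
  proof -
    have "(1 - \<epsilon>) * Z \<le> (1 - \<epsilon>) * exp \<epsilon>" using Zle2 e1 by (intro mult_left_mono) auto
    then show ?thesis using ee by linarith
  qed
  define q where "q = mrf_dist n Om E psiV psiE"
  have qw: "q w = \<Phi> w / Z" for w
    by (simp add: q_def mrf_dist_def score Z_def)
  have L: "\<bar>psiE e v\<bar> \<le> ln (1 / d)" for e v
  proof -
    let ?x = "h (Max e) (v (Max e - 1)) (v (Max e))"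
    have hx: "d \<le> ?x" by (rule h_pos)
    have hx1: "?x \<le> 1" by (rule h_le1)
    have hx0: "0 < ?x" using hx d0 by linarith
    have "ln d \<le> ln ?x" using hx hx0 d0 by simp
    moreover have "ln ?x \<le> 0" using hx1 hx0 by simp
    moreover have "ln (1 / d) = - ln d" using d0 by (simp add: ln_div)
    ultimately show ?thesis unfolding psiE_def by linarith
  qed
  have Lnn: "0 \<le> ln (1 / d)" using d0 d1 by simp
  have deg: "weighted_max_degree n Om E psiE \<le> 2 * ln (1 / d)"
    unfolding weighted_max_degree_def
  proof (rule Max.boundedI)
    have "{\<bar>\<Sum>e\<in>{e\<in>E. i \<in> e}. psiE e (restrict u e)\<bar> | i u. i < n \<and> u \<in> PiE {..<n} Om}
      \<subseteq> (\<lambda>(i,u). \<bar>\<Sum>e\<in>{e\<in>E. i \<in> e}. psiE e (restrict u e)\<bar>) ` ({..<n} \<times> PiE {..<n} Om)"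
      by auto
    then show "finite {\<bar>\<Sum>e\<in>{e\<in>E. i \<in> e}. psiE e (restrict u e)\<bar> | i u. i < n \<and> u \<in> PiE {..<n} Om}"
    proof (rule finite_subset)
      show "finite ((\<lambda>(i,u). \<bar>\<Sum>e\<in>{e\<in>E. i \<in> e}. psiE e (restrict u e)\<bar>) ` ({..<n} \<times> PiE {..<n} Om))"
        using finP by auto
    qed
    show "{\<bar>\<Sum>e\<in>{e\<in>E. i \<in> e}. psiE e (restrict u e)\<bar> | i u. i < n \<and> u \<in> PiE {..<n} Om} \<noteq> {}"
    proof -
      obtain u where u: "u \<in> PiE {..<n} Om" using neP by blast
      have "0 < n" using n1 by simp
      then show ?thesis using u by blast
    qed
  next
    fix x assume "x \<in> {\<bar>\<Sum>e\<in>{e\<in>E. i \<in> e}. psiE e (restrict u e)\<bar> | i u. i < n \<and> u \<in> PiE {..<n} Om}"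
    then obtain i u where x: "x = \<bar>\<Sum>e\<in>{e\<in>E. i \<in> e}. psiE e (restrict u e)\<bar>" by auto
    have sub: "{e\<in>E. i \<in> e} \<subseteq> {{i - 1, i}, {i, i + 1}}"
      unfolding E_def by auto
    have c2: "card {e\<in>E. i \<in> e} \<le> 2"
    proof -
      have "card {e\<in>E. i \<in> e} \<le> card {{i - 1, i}, {i, i + 1}}"
        using sub by (intro card_mono) auto
      also have "\<dots> \<le> 2" by (simp add: card_insert_if)
      finally show ?thesis .
    qed
    have "x \<le> (\<Sum>e\<in>{e\<in>E. i \<in> e}. \<bar>psiE e (restrict u e)\<bar>)" unfolding x by (rule sum_abs)
    also have "\<dots> \<le> real (card {e\<in>E. i \<in> e}) * ln (1 / d)"
      using L by (intro sum_bounded_above) auto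
    also have "\<dots> \<le> 2 * ln (1 / d)"
      using c2 Lnn by (intro mult_right_mono) auto
    finally show "x \<le> 2 * ln (1 / d)" .
  qed
  show "\<exists>\<Delta> q. is_Delta_MRF_dist n Om \<Delta> q \<and>
           \<Delta> \<le> 2 * ln (real n * real (Max ((\<lambda>i. card (Om i)) ` {..<n})) / \<epsilon>) \<and>
           (\<forall>w\<in>PiE {..<n} Om. q w \<ge> (1 - \<epsilon>) * p w)"
  proof (intro exI conjI)
    show "is_Delta_MRF_dist n Om (weighted_max_degree n Om E psiE) q"
      unfolding is_Delta_MRF_dist_def q_def
      by (intro exI[of _ E] exI[of _ psiV] exI[of _ psiE]) (auto simp: E_def)
    have "1 / d = real n * real k / \<epsilon>" unfolding d_def by simp
    then show "weighted_max_degree n Om E psiE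
        \<le> 2 * ln (real n * real (Max ((\<lambda>i. card (Om i)) ` {..<n})) / \<epsilon>)"
      using deg by (simp add: k_def)
    show "\<forall>w\<in>PiE {..<n} Om. (1 - \<epsilon>) * p w \<le> q w"
    proof
      fix w assume w: "w \<in> PiE {..<n} Om"
      have set1: "{u\<in>PiE {..<n} Om. \<forall>j\<le>n-1. u j = w j} = {w}"
      proof
        show "{w} \<subseteq> {u\<in>PiE {..<n} Om. \<forall>j\<le>n-1. u j = w j}" using w by auto
        show "{u\<in>PiE {..<n} Om. \<forall>j\<le>n-1. u j = w j} \<subseteq> {w}"
        proof
          fix u assume "u \<in> {u\<in>PiE {..<n} Om. \<forall>j\<le>n-1. u j = w j}"
          then have "u \<in> PiE {..<n} Om" "\<forall>j\<le>n-1. u j = w j" by auto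
          then have "u = w" using w n1 by (intro PiE_ext[of u "{..<n}" Om w]) auto
          then show "u \<in> {w}" by simp
        qed
      qed
      have "p w = prob_ev n Om p (\<lambda>u. \<forall>j\<le>n-1. u j = w j)"
        unfolding prob_ev_def set1 by simp
      also have "\<dots> \<le> (\<Prod>j\<le>n-1. max (Tr n Om p j (w (j-1)) (w j)) d)"
        using prefix_bound[OF mc fin w d0, of "n-1"] n1 by simp
      also have "\<dots> = \<Phi> w"
      proof -
        have "{..n-1} = {..<n}" using n1 by auto
        then show ?thesis by (simp add: \<Phi>_def h_def)
      qed
      finally have pw: "p w \<le> \<Phi> w" .
      have pw0: "0 \<le> p w" using dist w by (simp add: is_distribution_def)
      have "(1 - \<epsilon>) * p w \<le> (1 - \<epsilon>) * \<Phi> w" using pw e1 by (intro mult_left_mono) auto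
      also have "\<dots> \<le> \<Phi> w / Z"
      proof -
        have "1 - \<epsilon> \<le> 1 / Z" using Z1 Zpos by (simp add: le_divide_eq mult.commute)
        then have "(1 - \<epsilon>) * \<Phi> w \<le> (1 / Z) * \<Phi> w"
          using Phi_pos[of w] by (intro mult_right_mono) auto
        then show ?thesis by simp
      qed
      finally show "(1 - \<epsilon>) * p w \<le> q w" by (simp add: qw)
    qed
  qed
qed simp

end
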